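(* Let $\Gamma$ be a temporal language preserved by $\mathrm{peak}$. If $\Gamma$ pp-defines neither $\mathrm{EqXor}=\{(x,y,z)\in\mathbb{Q}^3\mid x=y\vee x=z\}$ nor $\mathrm{EqOr}_n=\{(x_1,\dots,x_n)\in\mathbb{Q}^n\mid\bigvee_{i\neq j}x_i=x_j\}$ for any $n\ge3$, then $\Gamma$ is preserved by all permutations of $\mathbb{Q}$.
   Context: A temporal language is a relational structure with domain $\mathbb{Q}$ and finite signature whose relations are first-order definable in $(\mathbb{Q};<)$. $\Gamma$ pp-defines $R$ if $R$ is definable by a primitive positive formula (existentially quantified conjunction of atomic formulas) over the signature of $\Gamma$. A unary operation $f$ preserves $\Gamma$ if applying $f$ componentwise maps each relation of $\Gamma$ into itself. $\mathrm{peak}(x)=-1$ for $x\neq0$ and $1$ for $x=0$. *)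

theory Defs
  imports Complex_Main
begin

datatype fo = FLt nat nat | FEq nat nat | FNot fo | FAnd fo fo | FEx nat fo

fun fo_holds :: "(nat \<Rightarrow> rat) \<Rightarrow> fo \<Rightarrow> bool" where
  "fo_holds s (FLt x y) = (s x < s y)"
| "fo_holds s (FEq x y) = (s x = s y)"
| "fo_holds s (FNot \<phi>) = (\<not> fo_holds s \<phi>)"
| "fo_holds s (FAnd \<phi> \<psi>) = (fo_holds s \<phi> \<and> fo_holds s \<psi>)"
| "fo_holds s (FEx x \<phi>) = (\<exists>a. fo_holds (s(x := a)) \<phi>)"

fun fo_free :: "fo \<Rightarrow> nat set" where
  "fo_free (FLt x y) = {x, y}"
| "fo_free (FEq x y) = {x, y}"
| "fo_free (FNot \<phi>) = fo_free \<phi>"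
| "fo_free (FAnd \<phi> \<psi>) = fo_free \<phi> \<union> fo_free \<psi>"
| "fo_free (FEx x \<phi>) = fo_free \<phi> - {x}"

definition fo_definable :: "nat \<Rightarrow> rat list set \<Rightarrow> bool" where
  "fo_definable n R \<longleftrightarrow> (\<exists>\<phi>. fo_free \<phi> \<subseteq> {..<n} \<and>
      R = {xs. length xs = n \<and> fo_holds (\<lambda>i. xs ! i) \<phi>})"

text \<open>A tstructure with domain Q and finite signature: a list of (arity, relation) pairs;
  the i-th relation symbol is interpreted by the i-th entry.\<close>
type_synonym tstructure = "(nat \<times> rat list set) list"

definition temporal_language :: "tstructure \<Rightarrow> bool" where
  "temporal_language \<Gamma> \<longleftrightarrow> (\<forall>(k, R) \<in> set \<Gamma>.
      (\<forall>t \<in> R. length t = k) \<and> fo_definable k R)"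

text \<open>Primitive positive definitions, in prenex form: variables 0..<n are free,
  variables n..<m are existentially quantified; atoms are relation atoms
  (relation index, argument variables) and equality atoms.\<close>
definition pp_defines :: "tstructure \<Rightarrow> nat \<Rightarrow> rat list set \<Rightarrow> bool" where
  "pp_defines \<Gamma> n R \<longleftrightarrow> (\<exists>m atoms eqs. n \<le> m \<and>
      (\<forall>(i, vs) \<in> set atoms. i < length \<Gamma> \<and> length vs = fst (\<Gamma> ! i) \<and> (\<forall>v \<in> set vs. v < m)) \<and>
      (\<forall>(u, v) \<in> set eqs. u < m \<and> v < m) \<and>
      R = {xs. length xs = n \<and> (\<exists>ys. length ys = m - n \<and>
              (\<forall>(i, vs) \<in> set atoms. map (\<lambda>v. (xs @ ys) ! v) vs \<in> snd (\<Gamma> ! i)) \<and>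
              (\<forall>(u, v) \<in> set eqs. (xs @ ys) ! u = (xs @ ys) ! v))})"

definition preserves :: "(rat \<Rightarrow> rat) \<Rightarrow> tstructure \<Rightarrow> bool" where
  "preserves f \<Gamma> \<longleftrightarrow> (\<forall>(k, R) \<in> set \<Gamma>. \<forall>t \<in> R. map f t \<in> R)"

definition peak :: "rat \<Rightarrow> rat" where
  "peak x = (if x = 0 then 1 else -1)"

definition EqXor :: "rat list set" where
  "EqXor = {[x, y, z] | x y z. x = y \<or> x = z}"

definition EqOr :: "nat \<Rightarrow> rat list set" where
  "EqOr n = {xs. length xs = n \<and> (\<exists>i j. i < n \<and> j < n \<and> i \<noteq> j \<and> xs ! i = xs ! j)}"

end

theory Submission
  imports Defs
begin


lemma fo_free_finite: "finite (fo_free \<phi>)"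
  by (induct \<phi>) auto

lemma dense_between:
  fixes L U :: "rat set"
  assumes "finite L" "finite U" "\<forall>l\<in>L. \<forall>u\<in>U. l < u"
  shows "\<exists>a. (\<forall>l\<in>L. l < a) \<and> (\<forall>u\<in>U. a < u)"
proof (cases "L = {}")
  case True
  show ?thesis
  proof (cases "U = {}")
    case True with \<open>L = {}\<close> show ?thesis by auto
  next
    case False
    have "\<forall>u\<in>U. Min U - 1 < u" using Min_le[OF assms(2)] by fastforce
    with \<open>L = {}\<close> show ?thesis by auto
  qed
next
  case False
  show ?thesis
  proof (cases "U = {}")
    case True
    have "\<forall>l\<in>L. l < Max L + 1" using Max_ge[OF assms(1)] by fastforce
    with True show ?thesis by auto
  next
    case False
    have "Max L < Min U" using assms \<open>L \<noteq> {}\<close> False by simp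
    then have "\<forall>l\<in>L. l < (Max L + Min U)/2" "\<forall>u\<in>U. (Max L + Min U)/2 < u"
      using Max_ge[OF assms(1)] Min_le[OF assms(2)] by fastforce+
    then show ?thesis by blast
  qed
qed

lemma ext_point:
  fixes s s' :: "nat \<Rightarrow> rat"
  assumes "finite V" "\<forall>i\<in>V. \<forall>j\<in>V. s i < s j \<longleftrightarrow> s' i < s' j"
  shows "\<exists>a'. \<forall>i\<in>V. (s i < a \<longleftrightarrow> s' i < a') \<and> (a < s i \<longleftrightarrow> a' < s' i)"
proof (cases "\<exists>i\<in>V. s i = a")
  case True
  then obtain i0 where i0: "i0 \<in> V" "s i0 = a" by blast
  show ?thesis
  proof (intro exI[of _ "s' i0"] ballI)
    fix i assume i: "i \<in> V"
    have "s i < s i0 \<longleftrightarrow> s' i < s' i0" "s i0 < s i \<longleftrightarrow> s' i0 < s' i"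
      using assms(2) i i0(1) by blast+
    then show "(s i < a \<longleftrightarrow> s' i < s' i0) \<and> (a < s i \<longleftrightarrow> s' i0 < s' i)"
      using i0(2) by simp
  qed
next
  case nf: False
  let ?L = "s' ` {i\<in>V. s i < a}" and ?U = "s' ` {i\<in>V. a < s i}"
  have "\<forall>l\<in>?L. \<forall>u\<in>?U. l < u"
  proof (intro ballI)
    fix l u assume "l \<in> ?L" "u \<in> ?U"
    then obtain i j where ij: "i \<in> V" "s i < a" "l = s' i" "j \<in> V" "a < s j" "u = s' j" by blast
    then have "s i < s j" by simp
    then show "l < u" using assms(2) ij by blast
  qed
  moreover have "finite ?L" "finite ?U" using assms(1) by auto
  ultimately obtain a' where a': "\<forall>l\<in>?L. l < a'" "\<forall>u\<in>?U. a' < u"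
    using dense_between[of ?L ?U] by blast
  show ?thesis
  proof (intro exI[of _ a'] ballI)
    fix i assume i: "i \<in> V"
    show "(s i < a \<longleftrightarrow> s' i < a') \<and> (a < s i \<longleftrightarrow> a' < s' i)"
    proof (cases "s i < a")
      case lt: True
      then have "s' i \<in> ?L" using i by blast
      then have "s' i < a'" using a'(1) by blast
      then show ?thesis using lt by auto
    next
      case nlt: False
      have "s i \<noteq> a" using nf i by blast
      then have gt: "a < s i" using nlt by linarith
      then have "s' i \<in> ?U" using i by blast
      then have "a' < s' i" using a'(2) by blast
      then show ?thesis using nlt gt by auto
    qed
  qed
qed

lemma fo_ex_step:
  assumes IH: "\<And>s s'. (\<forall>i\<in>fo_free \<phi>. \<forall>j\<in>fo_free \<phi>. s i < s j \<longleftrightarrow> s' i < s' j) \<Longrightarrow> fo_holds s \<phi> = fo_holds s' \<phi>"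
    and H: "\<forall>i\<in>fo_free \<phi> - {x}. \<forall>j\<in>fo_free \<phi> - {x}. s i < s j \<longleftrightarrow> s' i < s' j"
    and ex: "fo_holds (s(x := a)) \<phi>"
  shows "\<exists>a'. fo_holds (s'(x := a')) \<phi>"
proof -
  obtain a' where a': "\<forall>i\<in>fo_free \<phi> - {x}. (s i < a \<longleftrightarrow> s' i < a') \<and> (a < s i \<longleftrightarrow> a' < s' i)"
    using ext_point[OF _ H] fo_free_finite by blast
  have "\<forall>i\<in>fo_free \<phi>. \<forall>j\<in>fo_free \<phi>. (s(x := a)) i < (s(x := a)) j \<longleftrightarrow> (s'(x := a')) i < (s'(x := a')) j"
    using H a' by auto
  then have "fo_holds (s'(x := a')) \<phi>" using IH ex by blast
  then show ?thesis by blast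
qed

lemma fo_inv:
  "(\<forall>i\<in>fo_free \<phi>. \<forall>j\<in>fo_free \<phi>. s i < s j \<longleftrightarrow> s' i < s' j) \<Longrightarrow> fo_holds s \<phi> = fo_holds s' \<phi>"
proof (induct \<phi> arbitrary: s s')
  case (FLt x y) then show ?case by auto
next
  case (FEq x y)
  have e: "\<And>a b::rat. a = b \<longleftrightarrow> \<not> a < b \<and> \<not> b < a" by auto
  show ?case using FEq by (simp only: fo_holds.simps e[of "s x"] e[of "s' x"]) simp
next
  case (FNot \<phi>) then show ?case by auto
next
  case (FAnd \<phi>1 \<phi>2)
  have "fo_holds s \<phi>1 = fo_holds s' \<phi>1" using FAnd.hyps(1)[of s s'] FAnd.prems by simp
  moreover have "fo_holds s \<phi>2 = fo_holds s' \<phi>2" using FAnd.hyps(2)[of s s'] FAnd.prems by simp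
  ultimately show ?case by simp
next
  case (FEx x \<phi>)
  have H2: "\<forall>i\<in>fo_free \<phi> - {x}. \<forall>j\<in>fo_free \<phi> - {x}. s' i < s' j \<longleftrightarrow> s i < s j"
    using FEx.prems by auto
  have IH2: "\<And>s s'. (\<forall>i\<in>fo_free \<phi>. \<forall>j\<in>fo_free \<phi>. s i < s j \<longleftrightarrow> s' i < s' j) \<Longrightarrow> fo_holds s \<phi> = fo_holds s' \<phi>"
    using FEx.hyps by blast
  have d1: "fo_holds s (FEx x \<phi>) \<Longrightarrow> fo_holds s' (FEx x \<phi>)"
  proof -
    assume "fo_holds s (FEx x \<phi>)"
    then obtain a where "fo_holds (s(x := a)) \<phi>" by auto
    from fo_ex_step[OF IH2 _ this, of s'] FEx.prems show ?thesis by simp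
  qed
  have d2: "fo_holds s' (FEx x \<phi>) \<Longrightarrow> fo_holds s (FEx x \<phi>)"
  proof -
    assume "fo_holds s' (FEx x \<phi>)"
    then obtain a where "fo_holds (s'(x := a)) \<phi>" by auto
    from fo_ex_step[OF IH2 H2 this] show ?thesis by simp
  qed
  from d1 d2 show ?case by blast
qed

definition sameord :: "rat list \<Rightarrow> rat list \<Rightarrow> bool" where
  "sameord x y \<longleftrightarrow> length x = length y \<and> (\<forall>i<length x. \<forall>j<length x. x!i < x!j \<longleftrightarrow> y!i < y!j)"

lemma fo_definable_ord:
  assumes "fo_definable n R" "x \<in> R" "sameord x y"
  shows "y \<in> R"
proof -
  obtain \<phi> where phi: "fo_free \<phi> \<subseteq> {..<n}" "R = {xs. length xs = n \<and> fo_holds (\<lambda>i. xs ! i) \<phi>}"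
    using assms(1) unfolding fo_definable_def by blast
  have lx: "length x = n" "fo_holds (\<lambda>i. x ! i) \<phi>" using assms(2) phi by auto
  have "\<forall>i\<in>fo_free \<phi>. \<forall>j\<in>fo_free \<phi>. x ! i < x ! j \<longleftrightarrow> y ! i < y ! j"
    using assms(3) phi(1) lx unfolding sameord_def by auto
  then have "fo_holds (\<lambda>i. y ! i) \<phi>" using fo_inv[of \<phi> "\<lambda>i. x ! i" "\<lambda>i. y ! i"] lx by simp
  then show ?thesis using phi lx assms(3) unfolding sameord_def by auto
qed


definition sameeq :: "rat list \<Rightarrow> rat list \<Rightarrow> bool" where
  "sameeq x y \<longleftrightarrow> length x = length y \<and> (\<forall>i<length x. \<forall>j<length x. x!i = x!j \<longleftrightarrow> y!i = y!j)"

definition subrel :: "rat list set \<Rightarrow> nat \<Rightarrow> nat list set \<Rightarrow> rat list set" where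
  "subrel R n V = {xs. length xs = n \<and> (\<forall>vs\<in>V. map (nth xs) vs \<in> R)}"

definition wfV :: "nat \<Rightarrow> nat \<Rightarrow> nat list set \<Rightarrow> bool" where
  "wfV k n V \<longleftrightarrow> finite V \<and> (\<forall>vs\<in>V. length vs = k \<and> (\<forall>v\<in>set vs. v < n))"

definition good :: "nat \<Rightarrow> rat list set \<Rightarrow> bool" where
  "good n T \<longleftrightarrow> (\<forall>x\<in>T. length x = n) \<and> (\<forall>x y. x \<in> T \<longrightarrow> sameord x y \<longrightarrow> y \<in> T)
     \<and> (\<forall>x\<in>T. map peak x \<in> T)"

definition eqclosed :: "rat list set \<Rightarrow> bool" where
  "eqclosed T \<longleftrightarrow> (\<forall>x y. x \<in> T \<longrightarrow> sameeq x y \<longrightarrow> y \<in> T)"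

lemma map_nth_comp:
  "\<forall>v\<in>set vs. v < length taus \<Longrightarrow> map (nth (map (nth y) taus)) vs = map (nth y) (map (nth taus) vs)"
  by (induct vs) auto

lemma subrel_comp:
  assumes "wfV k n V" "finite W" "\<forall>taus\<in>W. length taus = n \<and> (\<forall>v\<in>set taus. v < m)"
  shows "{y. length y = m \<and> (\<forall>taus\<in>W. map (nth y) taus \<in> subrel R n V)}
           = subrel R m {map (nth taus) vs | taus vs. taus \<in> W \<and> vs \<in> V}"
    and "wfV k m {map (nth taus) vs | taus vs. taus \<in> W \<and> vs \<in> V}"
proof -
  have fin: "finite {map (nth taus) vs | taus vs. taus \<in> W \<and> vs \<in> V}"
  proof -
    have "{map (nth taus) vs | taus vs. taus \<in> W \<and> vs \<in> V} = (\<lambda>(taus, vs). map (nth taus) vs) ` (W \<times> V)"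
      by auto
    then show ?thesis using assms(1,2) unfolding wfV_def by simp
  qed
  show "wfV k m {map (nth taus) vs | taus vs. taus \<in> W \<and> vs \<in> V}"
    unfolding wfV_def using fin assms(1,3) unfolding wfV_def by fastforce
  show "{y. length y = m \<and> (\<forall>taus\<in>W. map (nth y) taus \<in> subrel R n V)}
           = subrel R m {map (nth taus) vs | taus vs. taus \<in> W \<and> vs \<in> V}"
  proof -
    have e: "\<And>y taus vs. taus \<in> W \<Longrightarrow> vs \<in> V \<Longrightarrow> map (nth (map (nth y) taus)) vs = map (nth y) (map (nth taus) vs)"
      using assms(1,3) unfolding wfV_def by (intro map_nth_comp) auto
    show ?thesis
    proof (intro set_eqI iffI)
      fix y assume y: "y \<in> {y. length y = m \<and> (\<forall>taus\<in>W. map (nth y) taus \<in> subrel R n V)}"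
      show "y \<in> subrel R m {map (nth taus) vs | taus vs. taus \<in> W \<and> vs \<in> V}"
        unfolding subrel_def
      proof (intro CollectI conjI ballI)
        show "length y = m" using y by auto
        fix vs' assume "vs' \<in> {map (nth taus) vs | taus vs. taus \<in> W \<and> vs \<in> V}"
        then obtain taus vs where tv: "vs' = map (nth taus) vs" "taus \<in> W" "vs \<in> V" by blast
        have "map (nth (map (nth y) taus)) vs \<in> R" using y tv unfolding subrel_def by blast
        then show "map (nth y) vs' \<in> R" using tv(1) by (simp only: e[OF tv(2,3)])
      qed
    next
      fix y assume y: "y \<in> subrel R m {map (nth taus) vs | taus vs. taus \<in> W \<and> vs \<in> V}"
      show "y \<in> {y. length y = m \<and> (\<forall>taus\<in>W. map (nth y) taus \<in> subrel R n V)}"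
      proof (intro CollectI conjI ballI)
        show "length y = m" using y unfolding subrel_def by auto
        fix taus assume t: "taus \<in> W"
        show "map (nth y) taus \<in> subrel R n V" unfolding subrel_def
        proof (intro CollectI conjI ballI)
          show "length (map (nth y) taus) = n" using t assms(3) by auto
          fix vs assume v: "vs \<in> V"
          have "map (nth y) (map (nth taus) vs) \<in> R" using y t v unfolding subrel_def by blast
          then show "map (nth (map (nth y) taus)) vs \<in> R" by (simp only: e[OF t v])
        qed
      qed
    qed
  qed
qed

lemma good_subrel:
  assumes "good k R" "wfV k n V"
  shows "good n (subrel R n V)"
  unfolding good_def
proof (intro conjI allI impI ballI)
  fix x assume "x \<in> subrel R n V" then show "length x = n" unfolding subrel_def by auto
next
  fix x y assume x: "x \<in> subrel R n V" and o: "sameord x y"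
  show "y \<in> subrel R n V" unfolding subrel_def
  proof (intro CollectI conjI ballI)
    show "length y = n" using x o unfolding subrel_def sameord_def by auto
    fix vs assume vs: "vs \<in> V"
    have "map (nth x) vs \<in> R" using x vs unfolding subrel_def by auto
    moreover have "sameord (map (nth x) vs) (map (nth y) vs)"
      using vs assms(2) x o unfolding wfV_def sameord_def subrel_def by auto
    ultimately show "map (nth y) vs \<in> R" using assms(1) unfolding good_def by blast
  qed
next
  fix x assume x: "x \<in> subrel R n V"
  show "map peak x \<in> subrel R n V" unfolding subrel_def
  proof (intro CollectI conjI ballI)
    show "length (map peak x) = n" using x unfolding subrel_def by auto
    fix vs assume vs: "vs \<in> V"
    have "map (nth x) vs \<in> R" using x vs unfolding subrel_def by auto
    then have "map peak (map (nth x) vs) \<in> R" using assms(1) unfolding good_def by blast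
    moreover have eq: "map (nth (map peak x)) vs = map peak (map (nth x) vs)"
      using vs assms(2) x unfolding wfV_def subrel_def by auto
    ultimately show "map (nth (map peak x)) vs \<in> R" by (simp only: eq)
  qed
qed

lemma pp_subrel:
  assumes "i0 < length \<Gamma>" "\<Gamma> ! i0 = (k, R)" "wfV k n V"
  shows "pp_defines \<Gamma> n (subrel R n V)"
proof -
  have "finite V" using assms(3) unfolding wfV_def by simp
  then obtain vl where vl: "set vl = V" using finite_list by auto
  let ?atoms = "map (\<lambda>vs. (i0, vs)) vl"
  have a1: "\<forall>(i, vs)\<in>set ?atoms. i < length \<Gamma> \<and> length vs = fst (\<Gamma> ! i) \<and> (\<forall>v\<in>set vs. v < n)"
    using assms vl unfolding wfV_def by auto
  have a2: "\<forall>(u, v)\<in>set ([] :: (nat \<times> nat) list). u < n \<and> v < n" by simp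
  have a3: "subrel R n V = {xs. length xs = n \<and> (\<exists>ys. length ys = n - n \<and>
              (\<forall>(i, vs)\<in>set ?atoms. map (\<lambda>v. (xs @ ys) ! v) vs \<in> snd (\<Gamma> ! i)) \<and>
              (\<forall>(u, v)\<in>set ([] :: (nat \<times> nat) list). (xs @ ys) ! u = (xs @ ys) ! v))}"
  proof (intro set_eqI iffI)
    fix xs assume xs: "xs \<in> subrel R n V"
    have "\<forall>(i, vs)\<in>set ?atoms. map (\<lambda>v. (xs @ []) ! v) vs \<in> snd (\<Gamma> ! i)"
    proof
      fix p assume "p \<in> set ?atoms"
      then obtain vs where p: "p = (i0, vs)" "vs \<in> V" using vl by auto
      have "map (nth xs) vs \<in> R" using xs p(2) unfolding subrel_def by blast
      then show "case p of (i, vs) \<Rightarrow> map (\<lambda>v. (xs @ []) ! v) vs \<in> snd (\<Gamma> ! i)"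
        using p(1) assms(2) by simp
    qed
    then show "xs \<in> {xs. length xs = n \<and> (\<exists>ys. length ys = n - n \<and>
              (\<forall>(i, vs)\<in>set ?atoms. map (\<lambda>v. (xs @ ys) ! v) vs \<in> snd (\<Gamma> ! i)) \<and>
              (\<forall>(u, v)\<in>set ([] :: (nat \<times> nat) list). (xs @ ys) ! u = (xs @ ys) ! v))}"
      using xs unfolding subrel_def by (intro CollectI conjI exI[of _ "[]"]) simp_all
  next
    fix xs assume "xs \<in> {xs. length xs = n \<and> (\<exists>ys. length ys = n - n \<and>
              (\<forall>(i, vs)\<in>set ?atoms. map (\<lambda>v. (xs @ ys) ! v) vs \<in> snd (\<Gamma> ! i)) \<and>
              (\<forall>(u, v)\<in>set ([] :: (nat \<times> nat) list). (xs @ ys) ! u = (xs @ ys) ! v))}"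
    then obtain ys where ys: "length xs = n" "length ys = 0"
      "\<forall>(i, vs)\<in>set ?atoms. map (\<lambda>v. (xs @ ys) ! v) vs \<in> snd (\<Gamma> ! i)" by auto
    have "\<forall>vs\<in>V. map (nth xs) vs \<in> R"
    proof
      fix vs assume "vs \<in> V"
      then have "(i0, vs) \<in> set ?atoms" using vl by auto
      then have "map (\<lambda>v. (xs @ ys) ! v) vs \<in> snd (\<Gamma> ! i0)" using ys(3) by auto
      then show "map (nth xs) vs \<in> R" using ys(2) assms(2) by simp
    qed
    then show "xs \<in> subrel R n V" unfolding subrel_def using ys(1) by simp
  qed
  show ?thesis unfolding pp_defines_def
    apply (rule exI[of _ n], rule exI[of _ ?atoms], rule exI[of _ "[] :: (nat \<times> nat) list"])
    apply (intro conjI)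
       apply (rule order.refl)
      apply (rule a1)
     apply (rule a2)
    apply (rule a3)
    done
qed

lemma good_len: "good n T \<Longrightarrow> x \<in> T \<Longrightarrow> length x = n"
  unfolding good_def by blast

lemma good_ord: "good n T \<Longrightarrow> x \<in> T \<Longrightarrow> sameord x y \<Longrightarrow> y \<in> T"
  unfolding good_def by blast

lemma good_ind:
  assumes "good n T" "x \<in> T"
  shows "map (\<lambda>z. if z = c then 1 else -1) x \<in> T"
    and "map (\<lambda>z. if z = c then -1 else 1) x \<in> T"
proof -
  have "sameord x (map (\<lambda>z. z - c) x)" unfolding sameord_def by auto
  then have "map (\<lambda>z. z - c) x \<in> T" using good_ord assms by blast
  then have "map peak (map (\<lambda>z. z - c) x) \<in> T" using assms(1) unfolding good_def by blast
  moreover have eq1: "map peak (map (\<lambda>z. z - c) x) = map (\<lambda>z. if z = c then 1 else -1) x"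
    by (auto simp: peak_def)
  ultimately show i1: "map (\<lambda>z. if z = c then 1 else -1) x \<in> T" by (simp only: eq1)
  have "sameord (map (\<lambda>z. if z = c then 1 else -1) x) (map (\<lambda>z. z + 1) (map (\<lambda>z. if z = c then 1 else -1) x))"
    unfolding sameord_def by auto
  then have "map (\<lambda>z. z + 1) (map (\<lambda>z. if z = c then 1 else -1) x) \<in> T" using good_ord assms i1 by blast
  then have "map peak (map (\<lambda>z. z + 1) (map (\<lambda>z. if z = c then 1 else -1) x)) \<in> T"
    using assms(1) unfolding good_def by blast
  moreover have eq2: "map peak (map (\<lambda>z. z + 1) (map (\<lambda>z. if z = (c::rat) then 1 else -1) x)) = map (\<lambda>z. if z = c then -1 else 1) x"
    by (auto simp: peak_def)
  ultimately show "map (\<lambda>z. if z = c then -1 else 1) x \<in> T" by (simp only: eq2)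
qed



definition no3 :: "rat list \<Rightarrow> bool" where
  "no3 x \<longleftrightarrow> (\<forall>i<length x. \<forall>j<length x. \<forall>l<length x. x!i = x!j \<or> x!i = x!l \<or> x!j = x!l)"

lemma sameeq_no3:
  assumes "sameeq x y" "no3 x" shows "no3 y"
  unfolding no3_def
proof (intro allI impI)
  fix i j l assume ijl: "i < length y" "j < length y" "l < length y"
  have len: "length x = length y" using assms(1) unfolding sameeq_def by simp
  have "x!i = x!j \<or> x!i = x!l \<or> x!j = x!l" using assms(2) ijl len unfolding no3_def by simp
  moreover have "x!i = x!j \<longleftrightarrow> y!i = y!j" "x!i = x!l \<longleftrightarrow> y!i = y!l" "x!j = x!l \<longleftrightarrow> y!j = y!l"
    using assms(1) ijl len unfolding sameeq_def by simp_all
  ultimately show "y!i = y!j \<or> y!i = y!l \<or> y!j = y!l" by simp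
qed

lemma twoval:
  assumes g: "good n T" and x: "x \<in> T" and n3: "no3 x" and se: "sameeq x y"
  shows "y \<in> T"
proof (cases "length x = 0")
  case True
  then have "y = x" using se unfolding sameeq_def by simp
  then show ?thesis using x by simp
next
  case False
  define c where "c = x!0"
  have len: "length y = length x" using se unfolding sameeq_def by simp
  have hy: "\<forall>i<length x. x!i = c \<longleftrightarrow> y!i = y!0"
    using se False unfolding sameeq_def c_def by simp
  have n3y: "no3 y" using sameeq_no3[OF se n3] .
  show ?thesis
  proof (cases "\<exists>j<length y. y!j < y!0")
    case True
    then obtain j0 where j0: "j0 < length y" "y!j0 < y!0" by blast
    have vals: "\<forall>i<length y. y!i = y!0 \<or> y!i = y!j0"
    proof (intro allI impI)
      fix i assume "i < length y"
      moreover have "0 < length y" using False len by simp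
      ultimately have "y!i = y!0 \<or> y!i = y!j0 \<or> y!0 = y!j0" using n3y j0(1) unfolding no3_def by blast
      then show "y!i = y!0 \<or> y!i = y!j0" using j0 by auto
    qed
    have w: "map (\<lambda>z. if z = c then (1::rat) else -1) x \<in> T" using good_ind(1)[OF g x] .
    have "sameord (map (\<lambda>z. if z = c then (1::rat) else -1) x) y"
      unfolding sameord_def
    proof (intro conjI allI impI)
      show "length (map (\<lambda>z. if z = c then (1::rat) else -1) x) = length y" using len by simp
      fix i j assume ij: "i < length (map (\<lambda>z. if z = c then (1::rat) else -1) x)" "j < length (map (\<lambda>z. if z = c then (1::rat) else -1) x)"
      then have ij': "i < length x" "j < length x" by auto
      have e1: "map (\<lambda>z. if z = c then (1::rat) else -1) x ! i = (if y!i = y!0 then (1::rat) else -1)"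
        using hy ij' by simp
      have e2: "map (\<lambda>z. if z = c then (1::rat) else -1) x ! j = (if y!j = y!0 then (1::rat) else -1)"
        using hy ij' by simp
      have vi: "y!i = y!0 \<or> y!i = y!j0" and vj: "y!j = y!0 \<or> y!j = y!j0" using vals ij' len by auto
      show "(map (\<lambda>z. if z = c then (1::rat) else -1) x ! i < map (\<lambda>z. if z = c then (1::rat) else -1) x ! j) = (y ! i < y ! j)"
        unfolding e1 e2 using vi vj j0(2) by auto
    qed
    then show ?thesis using good_ord[OF g w] by blast
  next
    case nlt: False
    have w: "map (\<lambda>z. if z = c then (-1::rat) else 1) x \<in> T" using good_ind(2)[OF g x] .
    have "sameord (map (\<lambda>z. if z = c then (-1::rat) else 1) x) y"
      unfolding sameord_def
    proof (intro conjI allI impI)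
      show "length (map (\<lambda>z. if z = c then (-1::rat) else 1) x) = length y" using len by simp
      fix i j assume ij: "i < length (map (\<lambda>z. if z = c then (-1::rat) else 1) x)" "j < length (map (\<lambda>z. if z = c then (-1::rat) else 1) x)"
      then have ij': "i < length x" "j < length x" by auto
      have e1: "map (\<lambda>z. if z = c then (-1::rat) else 1) x ! i = (if y!i = y!0 then (-1::rat) else 1)"
        using hy ij' by simp
      have e2: "map (\<lambda>z. if z = c then (-1::rat) else 1) x ! j = (if y!j = y!0 then (-1::rat) else 1)"
        using hy ij' by simp
      have ge: "\<not> y!i < y!0" "\<not> y!j < y!0" using nlt ij' len by auto
      have t: "y!i = y!j \<or> y!i = y!0 \<or> y!j = y!0" using n3y ij' len False unfolding no3_def by simp
      show "(map (\<lambda>z. if z = c then (-1::rat) else 1) x ! i < map (\<lambda>z. if z = c then (-1::rat) else 1) x ! j) = (y ! i < y ! j)"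
        unfolding e1 e2 using ge t by auto
    qed
    then show ?thesis using good_ord[OF g w] by blast
  qed
qed

lemma good_const:
  assumes g: "good n T" and x: "x \<in> T"
  shows "replicate n c \<in> T"
proof -
  obtain c' :: rat where c': "c' \<notin> set x"
    using ex_new_if_finite[OF infinite_UNIV_char_0, of "set x"] by auto
  have "map (\<lambda>z. if z = c' then (1::rat) else -1) x = map (\<lambda>z. (-1::rat)) x"
    using c' by (intro map_cong) auto
  also have "\<dots> = replicate n (-1)" using good_len[OF g x] by (simp add: map_replicate_const)
  finally have r: "replicate n (-1) \<in> T" using good_ind(1)[OF g x, of c'] by simp
  have "sameord (replicate n (-1)) (replicate n c)" unfolding sameord_def by simp
  then show ?thesis using good_ord[OF g r] by blast
qed

lemma single_rest:
  assumes g: "good n T" and x: "x \<in> T" and d: "distinct x" and p: "p < n" and ly: "length y = n"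
    and y1: "\<forall>i<n. i \<noteq> p \<longrightarrow> y!i \<noteq> y!p"
    and y2: "\<forall>i<n. \<forall>j<n. i \<noteq> p \<longrightarrow> j \<noteq> p \<longrightarrow> y!i = y!j"
  shows "y \<in> T"
proof -
  have lx: "length x = n" using good_len[OF g x] .
  define w where "w = map (\<lambda>z. if z = x!p then (1::rat) else -1) x"
  have w: "w \<in> T" unfolding w_def using good_ind(1)[OF g x] .
  have lw: "length w = n" unfolding w_def using lx by simp
  have wi: "w!i = (if i = p then 1 else -1)" if i: "i < n" for i
  proof -
    have "w!i = (if x!i = x!p then 1 else -1)" unfolding w_def using i lx by simp
    moreover have "x!i = x!p \<longleftrightarrow> i = p" using d lx p i by (simp add: nth_eq_iff_index_eq)
    ultimately show ?thesis by simp
  qed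
  have pig: "\<And>a b c::rat. (a = 1 \<or> a = -1) \<Longrightarrow> (b = 1 \<or> b = -1) \<Longrightarrow> (c = 1 \<or> c = -1) \<Longrightarrow> a = b \<or> a = c \<or> b = c"
    by auto
  have "no3 w" unfolding no3_def
  proof (intro allI impI)
    fix i j l assume ijl: "i < length w" "j < length w" "l < length w"
    have "w!i = 1 \<or> w!i = -1" "w!j = 1 \<or> w!j = -1" "w!l = 1 \<or> w!l = -1"
      using wi ijl lw by simp_all
    then show "w!i = w!j \<or> w!i = w!l \<or> w!j = w!l" using pig by blast
  qed
  moreover have "sameeq w y" unfolding sameeq_def
  proof (intro conjI allI impI)
    show "length w = length y" using lw ly by simp
    fix i j assume "i < length w" "j < length w"
    then have ij: "i < n" "j < n" using lw by auto
    show "(w!i = w!j) = (y!i = y!j)"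
    proof (cases "i = p")
      case True
      then show ?thesis
      proof (cases "j = p")
        case True with \<open>i = p\<close> show ?thesis by simp
      next
        case False
        then have "y!j \<noteq> y!p" using y1 ij by blast
        then show ?thesis using wi[OF ij(1)] wi[OF ij(2)] False \<open>i = p\<close> by auto
      qed
    next
      case False
      then show ?thesis
      proof (cases "j = p")
        case True
        have "y!i \<noteq> y!p" using y1 ij False by blast
        then show ?thesis using wi[OF ij(1)] wi[OF ij(2)] False True by auto
      next
        case jf: False
        have "y!i = y!j" using y2 ij False jf by blast
        then show ?thesis using wi[OF ij(1)] wi[OF ij(2)] False jf by auto
      qed
    qed
  qed
  ultimately show ?thesis using twoval[OF g w] by blast
qed



lemma nondistinct_ex:
  assumes "\<not> distinct x"
  shows "\<exists>a b. a < b \<and> b < length x \<and> x!a = x!b"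
proof -
  obtain i j where ij: "i < length x" "j < length x" "i \<noteq> j" "x!i = x!j"
    using assms unfolding distinct_conv_nth by blast
  show ?thesis
  proof (cases "i < j")
    case True then show ?thesis using ij by blast
  next
    case False then have "j < i" using ij(3) by simp
    then show ?thesis using ij by (intro exI[of _ j] exI[of _ i]) simp
  qed
qed

lemma merge_step:
  assumes V: "wfV k n V"
    and IH: "\<forall>V'. wfV k (n-1) V' \<longrightarrow> eqclosed (subrel R (n-1) V')"
    and x: "x \<in> subrel R n V" and nd: "\<not> distinct x" and se: "sameeq x y"
  shows "y \<in> subrel R n V"
proof -
  have lx: "length x = n" using x unfolding subrel_def by simp
  have ly: "length y = n" using se lx unfolding sameeq_def by simp
  obtain a b where ab: "a < b" "b < n" "x!a = x!b" using nondistinct_ex[OF nd] lx by blast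
  have yab: "y!a = y!b" using se ab lx unfolding sameeq_def by auto
  define taus where "taus = map (\<lambda>j. if j < b then j else if j = b then a else j - 1) [0..<n]"
  define del where "del = (\<lambda>z::rat list. map (\<lambda>j. z!(if j < b then j else Suc j)) [0..<n-1])"
  have tw: "\<forall>t\<in>{taus}. length t = n \<and> (\<forall>v\<in>set t. v < n - 1)"
    unfolding taus_def using ab by auto
  have rec: "map (nth (del z)) taus = z" if z: "length z = n" "z!a = z!b" for z
  proof (rule nth_equalityI)
    show "length (map (nth (del z)) taus) = length z" unfolding taus_def using z by simp
    fix i assume "i < length (map (nth (del z)) taus)"
    then have i: "i < n" unfolding taus_def by simp
    have t: "taus ! i = (if i < b then i else if i = b then a else i - 1)" unfolding taus_def using i by simp
    have tl: "taus ! i < n - 1" using t i ab by auto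
    have dz: "del z ! j = z ! (if j < b then j else Suc j)" if "j < n - 1" for j
      unfolding del_def using that by simp
    have "map (nth (del z)) taus ! i = del z ! (taus ! i)" unfolding taus_def using i by simp
    also have "\<dots> = z ! (if taus ! i < b then taus ! i else Suc (taus ! i))" using dz[OF tl] .
    also have "\<dots> = z ! i" using t ab z(2) by auto
    finally show "map (nth (del z)) taus ! i = z ! i" .
  qed
  have fW: "finite {taus}" by simp
  note sc1 = subrel_comp(1)[OF V fW tw, of R]
  note sc2 = subrel_comp(2)[OF V fW tw]
  let ?V' = "{map (nth t) vs | t vs. t \<in> {taus} \<and> vs \<in> V}"
  have ec: "eqclosed (subrel R (n-1) ?V')" using IH sc2 by blast
  have dx: "del x \<in> subrel R (n-1) ?V'"
    unfolding sc1[symmetric] using rec[OF lx ab(3)] x unfolding del_def by simp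
  have sed: "sameeq (del x) (del y)" unfolding sameeq_def
  proof (intro conjI allI impI)
    show "length (del x) = length (del y)" unfolding del_def by simp
    fix i j assume "i < length (del x)" "j < length (del x)"
    then have ij: "i < n - 1" "j < n - 1" unfolding del_def by auto
    define f where "f = (\<lambda>i::nat. if i < b then i else Suc i)"
    have "f i < n" "f j < n" using ij unfolding f_def by auto
    then have "(x!(f i) = x!(f j)) = (y!(f i) = y!(f j))"
      using se lx unfolding sameeq_def by blast
    moreover have "del x ! i = x!(f i)" "del x ! j = x!(f j)" "del y ! i = y!(f i)" "del y ! j = y!(f j)"
      unfolding del_def f_def using ij by simp_all
    ultimately show "(del x ! i = del x ! j) = (del y ! i = del y ! j)" by simp
  qed
  have "del y \<in> subrel R (n-1) ?V'" using ec dx sed unfolding eqclosed_def by blast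
  then have "map (nth (del y)) taus \<in> subrel R n V" unfolding sc1[symmetric] by simp
  then show ?thesis using rec[OF ly yab] by simp
qed

definition rk :: "rat list \<Rightarrow> nat \<Rightarrow> nat" where
  "rk x i = card {l. l < length x \<and> x!l < x!i}"

lemma rk_less:
  assumes "i < length x" "x!i < x!j"
  shows "rk x i < rk x j"
proof -
  have "{l. l < length x \<and> x!l < x!i} \<subset> {l. l < length x \<and> x!l < x!j}"
    using assms by auto
  then show ?thesis unfolding rk_def by (intro psubset_card_mono) auto
qed

lemma rk_iff:
  assumes "distinct x" "i < length x" "j < length x"
  shows "x!i < x!j \<longleftrightarrow> rk x i < rk x j"
proof
  assume "x!i < x!j" then show "rk x i < rk x j" using rk_less assms by blast
next
  assume r: "rk x i < rk x j"
  show "x!i < x!j"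
  proof (rule ccontr)
    assume "\<not> x!i < x!j"
    then have "x!j < x!i \<or> x!j = x!i" by auto
    then show False
    proof
      assume "x!j < x!i" then have "rk x j < rk x i" using rk_less assms by blast
      then show False using r by simp
    next
      assume "x!j = x!i" then have "i = j" using assms by (simp add: nth_eq_iff_index_eq)
      then show False using r by simp
    qed
  qed
qed

lemma rk_bound:
  assumes "i < length x" shows "rk x i < length x"
proof -
  have "{l. l < length x \<and> x!l < x!i} \<subseteq> {..<length x} - {i}" by auto
  then have "rk x i \<le> card ({..<length x} - {i})" unfolding rk_def by (intro card_mono) auto
  also have "\<dots> = length x - 1" using assms by simp
  finally show ?thesis using assms by simp
qed

lemma rk_surj:
  assumes "distinct x" "r < length x"
  shows "\<exists>j<length x. rk x j = r"
proof -
  have inj: "inj_on (rk x) {..<length x}"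
  proof (rule inj_onI)
    fix i j assume ij: "i \<in> {..<length x}" "j \<in> {..<length x}" "rk x i = rk x j"
    show "i = j"
    proof (rule ccontr)
      assume "i \<noteq> j"
      then have "x!i \<noteq> x!j" using assms(1) ij by (simp add: nth_eq_iff_index_eq)
      then have "x!i < x!j \<or> x!j < x!i" by auto
      then show False using rk_iff[OF assms(1)] ij by auto
    qed
  qed
  have sub: "rk x ` {..<length x} \<subseteq> {..<length x}" using rk_bound by auto
  have "rk x ` {..<length x} = {..<length x}" using endo_inj_surj[OF _ sub inj] by simp
  then have "r \<in> rk x ` {..<length x}" using assms(2) by simp
  then show ?thesis by auto
qed

lemma rank_match:
  assumes dz: "distinct z" and dy: "distinct y" and lz: "length z = n" and ly: "length y = n"
  shows "\<exists>taus. length taus = n \<and> (\<forall>v\<in>set taus. v < n) \<and> sameord (map (nth z) taus) y"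
proof -
  have "\<forall>i. \<exists>j. i < n \<longrightarrow> j < n \<and> rk z j = rk y i"
    using rk_surj[OF dz] rk_bound ly lz by metis
  then obtain g where g: "\<And>i. i < n \<Longrightarrow> g i < n \<and> rk z (g i) = rk y i" by metis
  define taus where "taus = map g [0..<n]"
  have "sameord (map (nth z) taus) y" unfolding sameord_def
  proof (intro conjI allI impI)
    show "length (map (nth z) taus) = length y" unfolding taus_def using ly by simp
    fix i j assume "i < length (map (nth z) taus)" "j < length (map (nth z) taus)"
    then have ij: "i < n" "j < n" unfolding taus_def by auto
    have "map (nth z) taus ! i = z ! (g i)" "map (nth z) taus ! j = z ! (g j)"
      unfolding taus_def using ij by auto
    moreover have "z ! (g i) < z ! (g j) \<longleftrightarrow> rk z (g i) < rk z (g j)"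
      using rk_iff[OF dz] g ij lz by auto
    moreover have "y!i < y!j \<longleftrightarrow> rk y i < rk y j" using rk_iff[OF dy] ij ly by auto
    ultimately show "(map (nth z) taus ! i < map (nth z) taus ! j) = (y ! i < y ! j)"
      using g ij by simp
  qed
  moreover have "length taus = n" "\<forall>v\<in>set taus. v < n" unfolding taus_def using g by auto
  ultimately show ?thesis by blast
qed



lemma card_set_lt: "\<not> distinct z \<Longrightarrow> card (set z) < length z"
  using card_length[of z] card_distinct[of z] by linarith

lemma nd_of_card: "card (set v) < length v \<Longrightarrow> \<not> distinct v"
  using distinct_card[of v] by auto

lemma EqOr_iff: "z \<in> EqOr n \<longleftrightarrow> length z = n \<and> \<not> distinct z"
  unfolding EqOr_def distinct_conv_nth by auto

lemma caseA:
  assumes gR: "good k R" and V: "wfV k n V"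
    and allnd: "\<forall>z. length z = n \<longrightarrow> \<not> distinct z \<longrightarrow> z \<in> subrel R n V"
    and y: "y \<notin> subrel R n V" "distinct y" "length y = n"
  shows "\<exists>V'. wfV k n V' \<and> subrel R n V' = EqOr n"
proof -
  define W where "W = {taus. set taus \<subseteq> {..<n} \<and> length taus = n}"
  have fW: "finite W" unfolding W_def using finite_lists_length_eq[of "{..<n}" n] by simp
  have tw: "\<forall>t\<in>W. length t = n \<and> (\<forall>v\<in>set t. v < n)" unfolding W_def by auto
  note sc1 = subrel_comp(1)[OF V fW tw, of R]
  note sc2 = subrel_comp(2)[OF V fW tw]
  have gT: "good n (subrel R n V)" using good_subrel[OF gR V] .
  have "{y. length y = n \<and> (\<forall>taus\<in>W. map (nth y) taus \<in> subrel R n V)} = EqOr n"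
  proof (intro set_eqI iffI)
    fix z assume z: "z \<in> {y. length y = n \<and> (\<forall>taus\<in>W. map (nth y) taus \<in> subrel R n V)}"
    have "\<not> distinct z"
    proof
      assume dz: "distinct z"
      obtain taus where t: "length taus = n" "\<forall>v\<in>set taus. v < n" "sameord (map (nth z) taus) y"
        using rank_match[OF dz y(2) _ y(3)] z by auto
      have "taus \<in> W" unfolding W_def using t by auto
      then have "map (nth z) taus \<in> subrel R n V" using z by blast
      then have "y \<in> subrel R n V" using good_ord[OF gT _ t(3)] by blast
      then show False using y(1) by blast
    qed
    then show "z \<in> EqOr n" using z EqOr_iff by auto
  next
    fix z assume "z \<in> EqOr n"
    then have lz: "length z = n" and nd: "\<not> distinct z" using EqOr_iff by auto
    have "\<forall>taus\<in>W. map (nth z) taus \<in> subrel R n V"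
    proof
      fix taus assume t: "taus \<in> W"
      have "set (map (nth z) taus) \<subseteq> set z" using t lz unfolding W_def by auto
      then have "card (set (map (nth z) taus)) \<le> card (set z)" by (intro card_mono) auto
      also have "\<dots> < n" using card_set_lt[OF nd] lz by simp
      finally have "\<not> distinct (map (nth z) taus)" using t unfolding W_def by (intro nd_of_card) simp
      moreover have "length (map (nth z) taus) = n" using t unfolding W_def by simp
      ultimately show "map (nth z) taus \<in> subrel R n V" using allnd by blast
    qed
    then show "z \<in> {y. length y = n \<and> (\<forall>taus\<in>W. map (nth y) taus \<in> subrel R n V)}" using lz by simp
  qed
  then show ?thesis using sc1 sc2 by auto
qed

lemma caseB_or:
  assumes gR: "good k R" and V: "wfV k n V" and n3: "3 \<le> n"
    and ncl: "\<forall>x y. x \<in> subrel R n V \<longrightarrow> \<not> distinct x \<longrightarrow> sameeq x y \<longrightarrow> y \<in> subrel R n V"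
    and x: "x \<in> subrel R n V"
    and no2: "\<forall>z. length z = n \<longrightarrow> card (set z) = 2 \<longrightarrow> z \<in> subrel R n V"
    and ex: "\<exists>u. length u = n \<and> \<not> distinct u \<and> u \<notin> subrel R n V"
  shows "\<exists>m\<ge>3. \<exists>V'. wfV k m V' \<and> subrel R m V' = EqOr m"
proof -
  let ?T = "subrel R n V"
  have gT: "good n ?T" using good_subrel[OF gR V] .
  define Q where "Q = (\<lambda>c. \<exists>u. length u = n \<and> \<not> distinct u \<and> u \<notin> ?T \<and> card (set u) = c)"
  have exQ: "\<exists>c. Q c" using ex unfolding Q_def by blast
  define m where "m = (LEAST c. Q c)"
  have Qm: "Q m" unfolding m_def using LeastI_ex[OF exQ] .
  then obtain u where u: "length u = n" "\<not> distinct u" "u \<notin> ?T" "card (set u) = m"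
    unfolding Q_def by blast
  have minm: "m \<le> card (set z)" if "length z = n" "\<not> distinct z" "z \<notin> ?T" for z
  proof -
    have "Q (card (set z))" unfolding Q_def using that by blast
    then show ?thesis unfolding m_def by (rule Least_le)
  qed
  have m0: "m \<noteq> 0"
  proof
    assume "m = 0"
    then have "set u = {}" using u(4) by simp
    then show False using u(1) n3 by simp
  qed
  have m1: "m \<noteq> 1"
  proof
    assume "m = 1"
    then obtain c where c: "set u = {c}" using u(4) card_1_singletonE by blast
    then have "replicate (length u) c = u" by (intro replicate_length_same) auto
    moreover have "replicate n c \<in> ?T" using good_const[OF gT x] .
    ultimately show False using u(1,3) by simp
  qed
  have m2: "m \<noteq> 2" using no2 u by auto
  have m3: "3 \<le> m" using m0 m1 m2 by simp
  have mn: "m < n" using card_set_lt[OF u(2)] u by simp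
  define w where "w = sorted_list_of_set (set u)"
  have w: "distinct w" "set w = set u" "length w = m" unfolding w_def using u(4) by simp_all
  have "\<forall>i. \<exists>j. i < n \<longrightarrow> j < m \<and> w!j = u!i"
  proof
    fix i
    show "\<exists>j. i < n \<longrightarrow> j < m \<and> w!j = u!i"
    proof (cases "i < n")
      case True
      then have "u!i \<in> set w" using w(2) u(1) by simp
      then obtain j where "j < length w" "w!j = u!i" by (auto simp: in_set_conv_nth)
      then show ?thesis using w(3) by blast
    qed simp
  qed
  then obtain g where g: "\<And>i. i < n \<Longrightarrow> g i < m \<and> w!(g i) = u!i" by metis
  define taus where "taus = map g [0..<n]"
  have tw: "\<forall>t\<in>{taus}. length t = n \<and> (\<forall>v\<in>set t. v < m)" unfolding taus_def using g by auto
  have fW: "finite {taus}" by simp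
  note sc1 = subrel_comp(1)[OF V fW tw, of R]
  note sc2 = subrel_comp(2)[OF V fW tw]
  have key: "map (nth z) taus \<in> ?T \<longleftrightarrow> \<not> distinct z" if lz: "length z = m" for z
  proof -
    let ?v = "map (nth z) taus"
    have lv: "length ?v = n" unfolding taus_def by simp
    have vi: "?v ! i = z ! (g i)" if "i < n" for i unfolding taus_def using that by simp
    have sv: "set ?v \<subseteq> set z" using tw lz by auto
    then have cv: "card (set ?v) \<le> card (set z)" by (intro card_mono) auto
    have cz: "card (set z) \<le> m" using card_length[of z] lz by simp
    have ndv: "\<not> distinct ?v" using cv cz mn lv by (intro nd_of_card) simp
    show ?thesis
    proof
      assume vT: "?v \<in> ?T"
      show "\<not> distinct z"
      proof
        assume dz: "distinct z"
        have "sameeq ?v u" unfolding sameeq_def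
        proof (intro conjI allI impI)
          show "length ?v = length u" using lv u(1) by simp
          fix i j assume "i < length ?v" "j < length ?v"
          then have ij: "i < n" "j < n" using lv by auto
          have "?v!i = ?v!j \<longleftrightarrow> g i = g j" using vi ij dz g lz by (simp add: nth_eq_iff_index_eq)
          also have "\<dots> \<longleftrightarrow> u!i = u!j"
          proof -
            have gi: "g i < m" "g j < m" "w!(g i) = u!i" "w!(g j) = u!j" using g ij by auto
            have "w!(g i) = w!(g j) \<longleftrightarrow> g i = g j" using w(1,3) gi(1,2) by (simp add: nth_eq_iff_index_eq)
            then show ?thesis using gi(3,4) by simp
          qed
          finally show "(?v!i = ?v!j) = (u!i = u!j)" .
        qed
        then have "u \<in> ?T" using ncl vT ndv by blast
        then show False using u(3) by blast
      qed
    next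
      assume ndz: "\<not> distinct z"
      show "?v \<in> ?T"
      proof (rule ccontr)
        assume "?v \<notin> ?T"
        then have "m \<le> card (set ?v)" using minm lv ndv by blast
        moreover have "card (set z) < m" using card_set_lt[OF ndz] lz by simp
        ultimately show False using cv by simp
      qed
    qed
  qed
  have "{z. length z = m \<and> (\<forall>t\<in>{taus}. map (nth z) t \<in> ?T)} = EqOr m"
    using key EqOr_iff by auto
  then show ?thesis using sc1 sc2 m3 by auto
qed

lemma len3: "length z = 3 \<Longrightarrow> \<exists>p q r. z = [p, q, r]"
  by (auto simp: length_Suc_conv numeral_3_eq_3)

lemma caseB_xor:
  assumes gR: "good k R" and V: "wfV k n V" and n3: "3 \<le> n"
    and x: "x \<in> subrel R n V" and dx: "distinct x"
    and ex: "\<exists>u. length u = n \<and> card (set u) = 2 \<and> u \<notin> subrel R n V"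
  shows "\<exists>V'. wfV k 3 V' \<and> subrel R 3 V' = EqXor"
proof -
  let ?T = "subrel R n V"
  have gT: "good n ?T" using good_subrel[OF gR V] .
  define P where "P = (\<lambda>(u::rat list, a::rat). length u = n \<and> card (set u) = 2 \<and> u \<notin> ?T \<and> a \<in> set u)"
  define f where "f = (\<lambda>(u::rat list, a::rat). card {i. i < n \<and> u!i = a})"
  obtain u0 where u0: "length u0 = n" "card (set u0) = 2" "u0 \<notin> ?T" using ex by blast
  have "set u0 \<noteq> {}" using u0(2) by auto
  then obtain a0 where "a0 \<in> set u0" by (meson all_not_in_conv)
  then have P0: "P (u0, a0)" unfolding P_def using u0 by simp
  have bnd: "\<forall>y. P y \<longrightarrow> f y < Suc n"
  proof (intro allI impI)
    fix y :: "rat list \<times> rat"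
    obtain v c where y: "y = (v, c)" by (cases y)
    have "{i. i < n \<and> v!i = c} \<subseteq> {..<n}" by auto
    then have "card {i. i < n \<and> v!i = c} \<le> n" using card_mono[of "{..<n}"] by fastforce
    then show "f y < Suc n" unfolding f_def y by simp
  qed
  obtain ua where Pua: "P ua" and maxf: "\<forall>y. P y \<longrightarrow> f y \<le> f ua"
    using Lattices_Big.ex_has_greatest_nat[of P "(u0, a0)" f "Suc n", OF P0 bnd] by blast
  obtain u a where ua: "ua = (u, a)" by (cases ua)
  have lu: "length u = n" and c2: "card (set u) = 2" and uT: "u \<notin> ?T" and au: "a \<in> set u"
    using Pua unfolding ua P_def by auto
  have maxf': "card {i. i < n \<and> v!i = c} \<le> card {i. i < n \<and> u!i = a}" if "P (v, c)" for v c
    using maxf that unfolding ua f_def by fastforce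
  obtain b where sab: "set u = {a, b}" "a \<noteq> b"
  proof -
    from c2[unfolded card_2_iff] obtain x1 y1 where xy: "set u = {x1, y1}" "x1 \<noteq> y1" by blast
    show ?thesis
    proof (cases "a = x1")
      case True then show ?thesis using that xy by blast
    next
      case False then have "a = y1" using au xy by auto
      then show ?thesis using that[of x1] xy by auto
    qed
  qed
  have ub: "u!i = a \<or> u!i = b" if "i < n" for i
  proof -
    have "u!i \<in> set u" using that lu by simp
    then show ?thesis using sab by auto
  qed
  have "b \<in> set u" using sab by simp
  then obtain c where c: "c < n" "u!c = b" using lu by (auto simp: in_set_conv_nth)
  have "\<exists>c'. c' < n \<and> c' \<noteq> c \<and> u!c' = b"
  proof (rule ccontr)
    assume "\<not> (\<exists>c'. c' < n \<and> c' \<noteq> c \<and> u!c' = b)"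
    then have oth: "\<forall>i<n. i \<noteq> c \<longrightarrow> u!i = a" using ub by blast
    have "u \<in> ?T"
    proof (rule single_rest[OF gT x dx c(1) lu])
      show "\<forall>i<n. i \<noteq> c \<longrightarrow> u!i \<noteq> u!c" using oth c sab by auto
      show "\<forall>i<n. \<forall>j<n. i \<noteq> c \<longrightarrow> j \<noteq> c \<longrightarrow> u!i = u!j" using oth by auto
    qed
    then show False using uT by blast
  qed
  then obtain c' where c': "c' < n" "c' \<noteq> c" "u!c' = b" by blast
  define taus where "taus = map (\<lambda>i. if u!i = a then 0 else if i = c then 2 else (1::nat)) [0..<n]"
  have tw: "\<forall>t\<in>{taus}. length t = n \<and> (\<forall>v\<in>set t. v < 3)" unfolding taus_def by auto
  have fW: "finite {taus}" by simp
  note sc1 = subrel_comp(1)[OF V fW tw, of R]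
  note sc2 = subrel_comp(2)[OF V fW tw]
  have key: "map (nth [p, q, r]) taus \<in> ?T \<longleftrightarrow> (p = q \<or> p = r)" for p q r
  proof -
    define v where "v = map (nth [p, q, r]) taus"
    have lv: "length v = n" unfolding v_def taus_def by simp
    have vi: "v!i = (if u!i = a then p else if i = c then r else q)" if "i < n" for i
      unfolding v_def taus_def using that by simp
    have "v \<in> ?T \<longleftrightarrow> (p = q \<or> p = r)"
    proof (cases "p = q")
      case pq: True
      show ?thesis
      proof (cases "p = r")
        case pr: True
        have "v = replicate n p"
          by (rule nth_equalityI) (use lv vi pq pr in auto)
        then show ?thesis using good_const[OF gT x] pq by simp
      next
        case pr: False
        have "v \<in> ?T"
        proof (rule single_rest[OF gT x dx c(1) lv])
          show "\<forall>i<n. i \<noteq> c \<longrightarrow> v!i \<noteq> v!c" using vi c sab pq pr by auto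
          show "\<forall>i<n. \<forall>j<n. i \<noteq> c \<longrightarrow> j \<noteq> c \<longrightarrow> v!i = v!j" using vi pq by auto
        qed
        then show ?thesis using pq by simp
      qed
    next
      case pq: False
      show ?thesis
      proof (cases "p = r")
        case pr: True
        have "v \<in> ?T"
        proof (rule ccontr)
          assume vT: "v \<notin> ?T"
          have sv: "set v = {p, q}"
          proof
            show "set v \<subseteq> {p, q}"
            proof
              fix z assume "z \<in> set v"
              then obtain i where "i < n" "v!i = z" using lv by (auto simp: in_set_conv_nth)
              then show "z \<in> {p, q}" using vi pr by (auto split: if_splits)
            qed
            have "v!c = p" using vi c sab pr by simp
            moreover have "v!c' = q" using vi c' sab by simp
            ultimately show "{p, q} \<subseteq> set v" using c(1) c'(1) lv by (metis empty_subsetI insert_subset nth_mem)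
          qed
          have "P (v, p)" unfolding P_def using lv sv pq vT by simp
          then have le: "card {i. i < n \<and> v!i = p} \<le> card {i. i < n \<and> u!i = a}" by (rule maxf')
          have "{i. i < n \<and> v!i = p} = insert c {i. i < n \<and> u!i = a}"
            using vi c pq pr sab by auto
          moreover have "c \<notin> {i. i < n \<and> u!i = a}" using c sab by simp
          ultimately have "card {i. i < n \<and> v!i = p} = Suc (card {i. i < n \<and> u!i = a})" by simp
          then show False using le by simp
        qed
        then show ?thesis using pr by simp
      next
        case pr: False
        have "v \<notin> ?T"
        proof
          assume vT: "v \<in> ?T"
          define w where "w = map (\<lambda>z. if z = p then (1::rat) else -1) v"
          have wT: "w \<in> ?T" unfolding w_def using good_ind(1)[OF gT vT] .
          have lw: "length w = n" unfolding w_def using lv by simp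
          have wi: "w!i = (if u!i = a then 1 else -1)" if "i < n" for i
            unfolding w_def using that lv vi[OF that] pq pr by auto
          have pig: "\<And>a b c::rat. (a = 1 \<or> a = -1) \<Longrightarrow> (b = 1 \<or> b = -1) \<Longrightarrow> (c = 1 \<or> c = -1) \<Longrightarrow> a = b \<or> a = c \<or> b = c"
            by auto
          have "no3 w" unfolding no3_def
          proof (intro allI impI)
            fix i j l assume ijl: "i < length w" "j < length w" "l < length w"
            have "w!i = 1 \<or> w!i = -1" "w!j = 1 \<or> w!j = -1" "w!l = 1 \<or> w!l = -1"
              using wi ijl lw by simp_all
            then show "w!i = w!j \<or> w!i = w!l \<or> w!j = w!l" using pig by blast
          qed
          moreover have "sameeq w u" unfolding sameeq_def
          proof (intro conjI allI impI)
            show "length w = length u" using lw lu by simp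
            fix i j assume "i < length w" "j < length w"
            then have ij: "i < n" "j < n" using lw by auto
            show "(w!i = w!j) = (u!i = u!j)"
              using wi[OF ij(1)] wi[OF ij(2)] ub[OF ij(1)] ub[OF ij(2)] sab(2) by auto
          qed
          ultimately have "u \<in> ?T" using twoval[OF gT wT] by blast
          then show False using uT by blast
        qed
        then show ?thesis using pq pr by simp
      qed
    qed
    then show ?thesis unfolding v_def .
  qed
  have "{z. length z = 3 \<and> (\<forall>t\<in>{taus}. map (nth z) t \<in> ?T)} = EqXor"
  proof (intro set_eqI iffI)
    fix z assume z: "z \<in> {z. length z = 3 \<and> (\<forall>t\<in>{taus}. map (nth z) t \<in> ?T)}"
    then obtain p q r where zz: "z = [p, q, r]" using len3 by blast
    then have "p = q \<or> p = r" using z key by simp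
    then show "z \<in> EqXor" unfolding EqXor_def zz by blast
  next
    fix z assume "z \<in> EqXor"
    then obtain p q r where zz: "z = [p, q, r]" "p = q \<or> p = r" unfolding EqXor_def by blast
    then show "z \<in> {z. length z = 3 \<and> (\<forall>t\<in>{taus}. map (nth z) t \<in> ?T)}" using key by simp
  qed
  then show ?thesis using sc1 sc2 by auto
qed



lemma main_ind:
  assumes gR: "good k R"
    and noX: "\<forall>V. wfV k 3 V \<longrightarrow> subrel R 3 V \<noteq> EqXor"
    and noO: "\<forall>n\<ge>3. \<forall>V. wfV k n V \<longrightarrow> subrel R n V \<noteq> EqOr n"
  shows "wfV k n V \<Longrightarrow> eqclosed (subrel R n V)"
proof (induction n arbitrary: V rule: less_induct)
  case (less n)
  let ?T = "subrel R n V"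
  have gT: "good n ?T" using good_subrel[OF gR less.prems] .
  have ncl: "\<forall>x y. x \<in> ?T \<longrightarrow> \<not> distinct x \<longrightarrow> sameeq x y \<longrightarrow> y \<in> ?T"
  proof (intro allI impI)
    fix x y assume x: "x \<in> ?T" and nd: "\<not> distinct x" and se: "sameeq x y"
    have lx: "length x = n" using good_len[OF gT x] .
    have "n \<noteq> 0" using nd lx by auto
    then have IH': "\<forall>V'. wfV k (n-1) V' \<longrightarrow> eqclosed (subrel R (n-1) V')"
      using less.IH by simp
    show "y \<in> ?T" using merge_step[OF less.prems IH' x nd se] .
  qed
  show "eqclosed ?T" unfolding eqclosed_def
  proof (intro allI impI)
    fix x y assume x: "x \<in> ?T" and se: "sameeq x y"
    have lx: "length x = n" using good_len[OF gT x] .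
    have ly: "length y = n" using se lx unfolding sameeq_def by simp
    show "y \<in> ?T"
    proof (cases "distinct x")
      case False
      then show ?thesis using ncl x se by blast
    next
      case dx: True
      show ?thesis
      proof (cases "n \<le> 2")
        case True
        have "no3 x" unfolding no3_def
        proof (intro allI impI)
          fix i j l assume "i < length x" "j < length x" "l < length x"
          then have "i = j \<or> i = l \<or> j = l" using True lx by linarith
          then show "x!i = x!j \<or> x!i = x!l \<or> x!j = x!l" by auto
        qed
        then show ?thesis using twoval[OF gT x _ se] by blast
      next
        case False
        then have n3: "3 \<le> n" by simp
        have dy: "distinct y" using dx se lx ly unfolding sameeq_def distinct_conv_nth by auto
        show ?thesis
        proof (rule ccontr)
          assume yT: "y \<notin> ?T"
          show False
          proof (cases "\<forall>z. length z = n \<longrightarrow> \<not> distinct z \<longrightarrow> z \<in> ?T")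
            case A: True
            obtain V' where "wfV k n V'" "subrel R n V' = EqOr n"
              using caseA[OF gR less.prems A yT dy ly] by blast
            then show False using noO n3 by blast
          next
            case nA: False
            show False
            proof (cases "\<exists>u. length u = n \<and> card (set u) = 2 \<and> u \<notin> ?T")
              case X: True
              obtain V' where "wfV k 3 V'" "subrel R 3 V' = EqXor"
                using caseB_xor[OF gR less.prems n3 x dx X] by blast
              then show False using noX by blast
            next
              case nX: False
              have no2: "\<forall>z. length z = n \<longrightarrow> card (set z) = 2 \<longrightarrow> z \<in> ?T" using nX by blast
              have ex: "\<exists>u. length u = n \<and> \<not> distinct u \<and> u \<notin> ?T" using nA by blast
              obtain m V' where "3 \<le> m" "wfV k m V'" "subrel R m V' = EqOr m"
                using caseB_or[OF gR less.prems n3 ncl x no2 ex] by blast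
              then show False using noO by blast
            qed
          qed
        qed
      qed
    qed
  qed
qed

lemma keyR:
  fixes \<Gamma> :: tstructure
  assumes tl: "temporal_language \<Gamma>"
    and pp: "preserves peak \<Gamma>"
    and nX: "\<not> pp_defines \<Gamma> 3 EqXor"
    and nO: "\<forall>n \<ge> 3. \<not> pp_defines \<Gamma> n (EqOr n)"
    and kR: "(k, R) \<in> set \<Gamma>" and t: "t \<in> R" and bf: "bij f"
  shows "map f t \<in> R"
proof -
  obtain i0 where i0: "i0 < length \<Gamma>" "\<Gamma> ! i0 = (k, R)" using kR by (auto simp: in_set_conv_nth)
  have h1: "(\<lambda>(k, R). (\<forall>t\<in>R. length t = k) \<and> fo_definable k R) (k, R)"
    using tl kR unfolding temporal_language_def by (rule bspec)
  then have lens: "\<forall>t\<in>R. length t = k" and fd: "fo_definable k R" by simp_all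
  have h2: "(\<lambda>(k, R). \<forall>t\<in>R. map peak t \<in> R) (k, R)"
    using pp kR unfolding preserves_def by (rule bspec)
  then have pk: "\<forall>t\<in>R. map peak t \<in> R" by simp
  have gR: "good k R" unfolding good_def using lens pk fo_definable_ord[OF fd] by blast
  have noX: "\<forall>V. wfV k 3 V \<longrightarrow> subrel R 3 V \<noteq> EqXor"
    using pp_subrel[OF i0, of 3] nX by metis
  have noO: "\<forall>n\<ge>3. \<forall>V. wfV k n V \<longrightarrow> subrel R n V \<noteq> EqOr n"
  proof (intro allI impI)
    fix n V assume "3 \<le> n" "wfV k n V"
    then show "subrel R n V \<noteq> EqOr n" using pp_subrel[OF i0 \<open>wfV k n V\<close>] nO by metis
  qed
  have wf: "wfV k k {[0..<k]}" unfolding wfV_def by auto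
  have ec: "eqclosed (subrel R k {[0..<k]})" using main_ind[OF gR noX noO wf] .
  have eqR: "subrel R k {[0..<k]} = R"
  proof (intro set_eqI iffI)
    fix xs assume "xs \<in> subrel R k {[0..<k]}"
    then have "length xs = k" "map (nth xs) [0..<k] \<in> R" unfolding subrel_def by auto
    then show "xs \<in> R" using map_nth[of xs] by simp
  next
    fix xs assume xs: "xs \<in> R"
    then have "length xs = k" using lens by blast
    then show "xs \<in> subrel R k {[0..<k]}" unfolding subrel_def using xs map_nth[of xs] by simp
  qed
  have "inj f" using bf by (rule bij_is_inj)
  then have "sameeq t (map f t)" unfolding sameeq_def by (simp add: inj_eq)
  then show ?thesis using ec t unfolding eqR eqclosed_def by blast
qed

theorem lemma4p7:
  fixes \<Gamma> :: tstructure
  assumes "temporal_language \<Gamma>"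
    and "preserves peak \<Gamma>"
    and "\<not> pp_defines \<Gamma> 3 EqXor"
    and "\<forall>n \<ge> 3. \<not> pp_defines \<Gamma> n (EqOr n)"
  shows "\<forall>f :: rat \<Rightarrow> rat. bij f \<longrightarrow> preserves f \<Gamma>"
proof (intro allI impI)
  fix f :: "rat \<Rightarrow> rat" assume bf: "bij f"
  show "preserves f \<Gamma>" unfolding preserves_def
  proof (intro ballI)
    fix p assume p: "p \<in> set \<Gamma>"
    obtain k R where kR: "p = (k, R)" by (cases p)
    have "\<forall>t\<in>R. map f t \<in> R" using keyR[OF assms _ _ bf] p kR by blast
    then show "case p of (k, R) \<Rightarrow> \<forall>t\<in>R. map f t \<in> R" using kR by simp
  qed
qed

end
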